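(* Let $\lambda_1-\lambda_2=2$ with $\lambda_2\ge1$, and $n=\lambda_1+\lambda_2$. If $(\mu_1,\mu_2)$ is a partition of $n$ with two positive parts such that there exist commuting nilpotent $n\times n$ matrices $B,A$ with $\mathrm{sh}(B)=(\lambda_1,\lambda_2)$ and $\mathrm{sh}(A)=(\mu_1,\mu_2)$, then $\mu_1=\lambda_1$ or $\mu_1=\lambda_1-1$.
   Context: $\mathbb{F}$ is an algebraically closed field of characteristic $0$ and matrices are over $\mathbb{F}$. For a nilpotent matrix $A$, $\mathrm{sh}(A)$ is the partition of $n$ given by the sizes of the Jordan blocks of its Jordan canonical form. *)

theory Defs
  imports "Jordan_Normal_Form.Jordan_Normal_Form_Uniqueness" "HOL-Computational_Algebra.Polynomial"
          "HOL-Library.Multiset"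
begin

definition nilpotent_mat :: "'a :: semiring_1 mat \<Rightarrow> bool" where
  "nilpotent_mat A \<longleftrightarrow> (\<exists>k. A ^\<^sub>m k = 0\<^sub>m (dim_row A) (dim_col A))"

definition has_shape :: "'a :: semiring_1 mat \<Rightarrow> nat multiset \<Rightarrow> bool" where
  "has_shape A p \<longleftrightarrow> (\<exists>n_as. jordan_nf A n_as \<and> mset (map fst n_as) = p)"

end

theory Submission
  imports Defs
begin
lemma mult_entry: "A \<in> carrier_mat n n \<Longrightarrow> B \<in> carrier_mat n n \<Longrightarrow> i<n \<Longrightarrow> j<n \<Longrightarrow> (A*B)$$(i,j) = (\<Sum>k<n. A$$(i,k) * B$$(k,j))"
  by (auto simp: scalar_prod_def lessThan_atLeast0 intro!: sum.cong)

definition gtri :: "(nat \<Rightarrow> nat) \<Rightarrow> nat \<Rightarrow> 'a::field mat \<Rightarrow> bool" where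
  "gtri deg n M \<longleftrightarrow> (\<forall>r c. r < n \<longrightarrow> c < n \<longrightarrow> M$$(r,c) \<noteq> 0 \<longrightarrow> deg c < deg r \<or> r = c)"

definition gstr :: "(nat \<Rightarrow> nat) \<Rightarrow> nat \<Rightarrow> nat \<Rightarrow> 'a::field mat \<Rightarrow> bool" where
  "gstr deg n k M \<longleftrightarrow> (\<forall>r c. r < n \<longrightarrow> c < n \<longrightarrow> M$$(r,c) \<noteq> 0 \<longrightarrow> deg c + k \<le> deg r)"

lemma gtri_mult:
  assumes A: "A \<in> carrier_mat n n" and B: "B \<in> carrier_mat n n"
    and tA: "gtri deg n A" and tB: "gtri deg n B"
  shows "gtri deg n (A*B)" "\<And>r. r < n \<Longrightarrow> (A*B)$$(r,r) = A$$(r,r) * B$$(r,r)"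
proof -
  show "gtri deg n (A*B)" unfolding gtri_def
  proof (intro allI impI)
    fix r c assume r: "r < n" and c: "c < n" and nz: "(A*B)$$(r,c) \<noteq> 0"
    then have "(\<Sum>k<n. A$$(r,k) * B$$(k,c)) \<noteq> 0" using mult_entry[OF A B r c] by simp
    then obtain k where k: "k < n" "A$$(r,k) * B$$(k,c) \<noteq> 0" by (meson sum.neutral lessThan_iff)
    then have "A$$(r,k) \<noteq> 0" "B$$(k,c) \<noteq> 0" by auto
    with tA tB r c k show "deg c < deg r \<or> r = c" unfolding gtri_def by fastforce
  qed
  fix r assume r: "r < n"
  have "(A*B)$$(r,r) = (\<Sum>k<n. A$$(r,k) * B$$(k,r))" using mult_entry[OF A B r r] .
  also have "\<dots> = A$$(r,r) * B$$(r,r) + (\<Sum>k\<in>{..<n}-{r}. A$$(r,k) * B$$(k,r))"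
    using r by (subst sum.remove[of _ r]) auto
  also have "(\<Sum>k\<in>{..<n}-{r}. A$$(r,k) * B$$(k,r)) = 0"
  proof (rule sum.neutral, rule ballI)
    fix k assume k: "k \<in> {..<n}-{r}"
    show "A$$(r,k) * B$$(k,r) = 0"
    proof (rule ccontr)
      assume "A$$(r,k) * B$$(k,r) \<noteq> 0"
      then have "A$$(r,k) \<noteq> 0" "B$$(k,r) \<noteq> 0" by auto
      with tA tB r k show False unfolding gtri_def by fastforce
    qed
  qed
  finally show "(A*B)$$(r,r) = A$$(r,r) * B$$(r,r)" by simp
qed

lemma gtri_pow:
  assumes A: "A \<in> carrier_mat n n" and tA: "gtri deg n A"
  shows "gtri deg n (A ^\<^sub>m k) \<and> (\<forall>r<n. (A ^\<^sub>m k)$$(r,r) = A$$(r,r) ^ k)"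
proof (induction k)
  case 0
  then show ?case using A by (auto simp: gtri_def)
next
  case (Suc k)
  have P: "A ^\<^sub>m k \<in> carrier_mat n n" using A by auto
  show ?case using gtri_mult[OF P A _ tA] Suc by auto
qed

lemma gstr_mult:
  assumes A: "A \<in> carrier_mat n n" and B: "B \<in> carrier_mat n n"
    and tA: "gstr deg n k A" and tB: "gstr deg n 1 B"
  shows "gstr deg n (Suc k) (A*B)"
  unfolding gstr_def
proof (intro allI impI)
  fix r c assume r: "r < n" and c: "c < n" and nz: "(A*B)$$(r,c) \<noteq> 0"
  then have "(\<Sum>j<n. A$$(r,j) * B$$(j,c)) \<noteq> 0" using mult_entry[OF A B r c] by simp
  then obtain j where j: "j < n" "A$$(r,j) * B$$(j,c) \<noteq> 0" by (meson sum.neutral lessThan_iff)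
  then have "A$$(r,j) \<noteq> 0" "B$$(j,c) \<noteq> 0" by auto
  with tA tB r c j show "deg c + Suc k \<le> deg r" unfolding gstr_def by fastforce
qed

lemma gstr_pow:
  assumes A: "A \<in> carrier_mat n n" and tA: "gstr deg n 1 A"
  shows "gstr deg n k (A ^\<^sub>m k)"
proof (induction k)
  case 0
  then show ?case using A by (auto simp: gstr_def)
next
  case (Suc k)
  have P: "A ^\<^sub>m k \<in> carrier_mat n n" using A by auto
  show ?case using gstr_mult[OF P A Suc tA] by simp
qed

lemma graded_nilpotent:
  fixes A :: "'a::field mat"
  assumes A: "A \<in> carrier_mat n n" and tA: "gtri deg n A"
    and nil: "A ^\<^sub>m K = 0\<^sub>m n n" and bnd: "\<And>r. r < n \<Longrightarrow> deg r \<le> D"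
  shows "A ^\<^sub>m (Suc D) = 0\<^sub>m n n"
proof -
  have diag: "A$$(r,r) = 0" if r: "r < n" for r
  proof -
    have "A$$(r,r) ^ K = (A ^\<^sub>m K)$$(r,r)" using gtri_pow[OF A tA] r by auto
    also have "\<dots> = 0" using nil r by simp
    finally show ?thesis by simp
  qed
  have s1: "gstr deg n 1 A" unfolding gstr_def
  proof (intro allI impI)
    fix r c assume "r < n" "c < n" "A$$(r,c) \<noteq> 0"
    with diag tA show "deg c + 1 \<le> deg r" unfolding gtri_def by fastforce
  qed
  have "gstr deg n (Suc D) (A ^\<^sub>m Suc D)" by (rule gstr_pow[OF A s1])
  then show ?thesis using bnd A
    by (intro eq_matI) (auto simp: gstr_def, fastforce)
qed

lemma toeplitz_shift:
  fixes f :: "nat \<Rightarrow> nat \<Rightarrow> 'a" and p q i j k :: nat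
  assumes sh: "\<And>i j. i+1<p \<Longrightarrow> j+1<q \<Longrightarrow> f (i+1) (j+1) = f i j"
  shows "i+k<p \<Longrightarrow> j+k<q \<Longrightarrow> f (i+k) (j+k) = f i j"
proof (induction k)
  case (Suc k)
  then have "f (i+k+1) (j+k+1) = f (i+k) (j+k)" using sh[of "i+k" "j+k"] by simp
  with Suc show ?case by simp
qed simp

lemma toeplitz:
  fixes f :: "nat \<Rightarrow> nat \<Rightarrow> 'a::zero" and p q i j :: nat
  assumes sh: "\<And>i j. i+1<p \<Longrightarrow> j+1<q \<Longrightarrow> f (i+1) (j+1) = f i j"
    and c0: "\<And>i. i+1<p \<Longrightarrow> f (i+1) 0 = 0"
    and re: "\<And>j. j+1<q \<Longrightarrow> f (p-1) j = 0"
    and ij: "i<p" "j<q" and nz: "f i j \<noteq> 0"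
  shows "i \<le> j \<and> i + q \<le> j + p"
proof (rule ccontr)
  assume "\<not> (i \<le> j \<and> i + q \<le> j + p)"
  then consider "j < i" | "i \<le> j" "j + p < i + q" by linarith
  then show False
  proof cases
    case 1
    have "f ((i-j) + j) (0 + j) = f (i-j) 0" by (rule toeplitz_shift[of p q f, OF sh]) (use 1 ij in auto)
    moreover have "f (i-j) 0 = 0" using c0[of "i-j-1"] 1 ij by (simp add: Suc_diff_Suc)
    ultimately show False using nz 1 by simp
  next
    case 2
    have "f (i + (p-1-i)) (j + (p-1-i)) = f i j" by (rule toeplitz_shift[of p q f, OF sh]) (use 2 ij in auto)
    moreover have "f (p-1) (j + (p-1-i)) = 0" by (rule re) (use 2 ij in auto)
    ultimately show False using nz ij by simp
  qed
qed

lemma jm2_entry: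
  assumes "r < s1 + s2" "c < s1 + s2"
  shows "jordan_matrix [(s1,0::'a::field),(s2,0)] $$ (r,c) = (if c = r+1 \<and> c \<noteq> s1 then 1 else 0)"
  using assms by (auto simp: jordan_matrix_def Let_def)

lemma jm2_pow_entry:
  assumes "r < s1 + s2" "c < s1 + s2"
  shows "(jordan_matrix [(s1,e1::'a::field),(s2,e2)] ^\<^sub>m k) $$ (r,c) =
     (if r < s1 then (if c < s1 then (jordan_block s1 e1 ^\<^sub>m k) $$ (r,c) else 0)
      else if c < s1 then 0 else (jordan_block s2 e2 ^\<^sub>m k) $$ (r-s1,c-s1))"
  using assms by (auto simp: jordan_matrix_pow Let_def)

lemma AJ_entry:
  fixes A :: "'a::field mat"
  assumes A: "A \<in> carrier_mat (s1+s2) (s1+s2)" and r: "r < s1+s2" and c: "c < s1+s2"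
  shows "(A * jordan_matrix [(s1,0),(s2,0)])$$(r,c) = (if c \<noteq> 0 \<and> c \<noteq> s1 then A$$(r,c-1) else 0)"
proof -
  let ?J = "jordan_matrix [(s1,0::'a),(s2,0)]"
  have J: "?J \<in> carrier_mat (s1+s2) (s1+s2)" using jordan_matrix_carrier[of "[(s1,0::'a),(s2,0)]"] by simp
  have "(A * ?J)$$(r,c) = (\<Sum>k<s1+s2. A$$(r,k) * ?J$$(k,c))" by (rule mult_entry[OF A J r c])
  also have "\<dots> = (\<Sum>k<s1+s2. if k = c - 1 then (if c \<noteq> 0 \<and> c \<noteq> s1 then A$$(r,k) else 0) else 0)"
    by (rule sum.cong, simp) (use c in \<open>auto simp: jm2_entry\<close>)
  also have "\<dots> = (if c \<noteq> 0 \<and> c \<noteq> s1 then A$$(r,c-1) else 0)"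
    unfolding sum.delta[OF finite_lessThan] using c by auto
  finally show ?thesis .
qed

lemma JA_entry:
  fixes A :: "'a::field mat"
  assumes A: "A \<in> carrier_mat (s1+s2) (s1+s2)" and r: "r < s1+s2" and c: "c < s1+s2"
  shows "(jordan_matrix [(s1,0),(s2,0)] * A)$$(r,c) = (if r+1 < s1+s2 \<and> r+1 \<noteq> s1 then A$$(r+1,c) else 0)"
proof -
  let ?J = "jordan_matrix [(s1,0::'a),(s2,0)]"
  have J: "?J \<in> carrier_mat (s1+s2) (s1+s2)" using jordan_matrix_carrier[of "[(s1,0::'a),(s2,0)]"] by simp
  have "(?J * A)$$(r,c) = (\<Sum>k<s1+s2. ?J$$(r,k) * A$$(k,c))" by (rule mult_entry[OF J A r c])
  also have "\<dots> = (\<Sum>k<s1+s2. if k = r + 1 then (if r+1 \<noteq> s1 then A$$(k,c) else 0) else 0)"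
    by (rule sum.cong, simp) (use r in \<open>auto simp: jm2_entry\<close>)
  also have "\<dots> = (if r+1 < s1+s2 \<and> r+1 \<noteq> s1 then A$$(r+1,c) else 0)"
    unfolding sum.delta[OF finite_lessThan] by auto
  finally show ?thesis .
qed

lemma block_pattern:
  fixes A :: "'a::field mat"
  assumes A: "A \<in> carrier_mat (s1+s2) (s1+s2)"
    and comm: "A * jordan_matrix [(s1,0),(s2,0)] = jordan_matrix [(s1,0),(s2,0)] * A"
    and s: "s1 > 0" "s2 > 0"
    and X: "(oX,p) \<in> {(0,s1),(s1,s2)}" and Y: "(oY,q) \<in> {(0,s1),(s1,s2)}"
    and ij: "i < p" "j < q" and nz: "A$$(oX+i,oY+j) \<noteq> 0"
  shows "i \<le> j \<and> i + q \<le> j + p"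
proof -
  have R: "(if r+1 < s1+s2 \<and> r+1 \<noteq> s1 then A$$(r+1,c) else 0) = (if c \<noteq> 0 \<and> c \<noteq> s1 then A$$(r,c-1) else 0)"
    if "r < s1+s2" "c < s1+s2" for r c
    using AJ_entry[OF A that] JA_entry[OF A that] comm by simp
  show ?thesis
  proof (rule toeplitz[where f = "\<lambda>i j. A$$(oX+i,oY+j)" and p = p and q = q])
    fix i j assume a: "i+1 < p" "j+1 < q"
    show "A$$(oX+(i+1),oY+(j+1)) = A$$(oX+i,oY+j)"
      using R[of "oX+i" "oY+(j+1)"] a X Y s by auto
  next
    fix i assume a: "i+1 < p"
    show "A$$(oX+(i+1),oY+0) = 0"
      using R[of "oX+i" "oY"] a X Y s by auto
  next
    fix j assume a: "j+1 < q"
    show "A$$(oX+(p-1),oY+j) = 0"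
      using R[of "oX+(p-1)" "oY+(j+1)"] a X Y s by auto
  qed (use ij nz in auto)
qed

lemma core:
  fixes A :: "'a::field mat"
  assumes s: "(s1 = b+2 \<and> s2 = b) \<or> (s1 = b \<and> s2 = b+2)" and b: "b \<ge> 1"
    and A: "A \<in> carrier_mat (s1+s2) (s1+s2)"
    and comm: "A * jordan_matrix [(s1,0),(s2,0)] = jordan_matrix [(s1,0),(s2,0)] * A"
    and nil: "A ^\<^sub>m K = 0\<^sub>m (s1+s2) (s1+s2)"
  shows "A ^\<^sub>m (Suc (b+1)) = 0\<^sub>m (s1+s2) (s1+s2)"
proof -
  define dg :: "nat \<Rightarrow> nat \<Rightarrow> nat" where "dg p i = p - 1 - i + (if p = b then 1 else 0)" for p i
  define deg where "deg r = (if r < s1 then dg s1 r else dg s2 (r - s1))" for r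
  have sp: "s1 > 0" "s2 > 0" using s b by auto
  have dec: "\<exists>oX p i. (oX,p) \<in> {(0,s1),(s1,s2)} \<and> i < p \<and> r = oX + i \<and> deg r = dg p i"
    if "r < s1 + s2" for r
  proof (cases "r < s1")
    case True then show ?thesis by (intro exI[of _ 0] exI[of _ s1] exI[of _ r]) (auto simp: deg_def)
  next
    case False then show ?thesis using that
      by (intro exI[of _ s1] exI[of _ s2] exI[of _ "r - s1"]) (auto simp: deg_def)
  qed
  have T: "gtri deg (s1+s2) A" unfolding gtri_def
  proof (intro allI impI)
    fix r c assume r: "r < s1+s2" and c: "c < s1+s2" and nz: "A$$(r,c) \<noteq> 0"
    obtain oX p i where X: "(oX,p) \<in> {(0,s1),(s1,s2)}" "i < p" "r = oX + i" "deg r = dg p i"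
      using dec[OF r] by blast
    obtain oY q j where Y: "(oY,q) \<in> {(0,s1),(s1,s2)}" "j < q" "c = oY + j" "deg c = dg q j"
      using dec[OF c] by blast
    have "i \<le> j \<and> i + q \<le> j + p"
      by (rule block_pattern[OF A comm sp X(1) Y(1) X(2) Y(2)]) (use nz X Y in simp)
    then show "deg c < deg r \<or> r = c" using X Y s unfolding dg_def by auto
  qed
  have bnd: "deg r \<le> b + 1" if "r < s1 + s2" for r
    using s that unfolding deg_def dg_def by auto
  show ?thesis by (rule graded_nilpotent[OF A T nil bnd])
qed

lemma two_list:
  assumes "mset (map fst xs) = {#x, y#}"
  shows "\<exists>u v e1 e2. xs = [(u,e1),(v,e2)] \<and> ((u = x \<and> v = y) \<or> (u = y \<and> v = x))"
proof -
  have "length xs = 2" using arg_cong[OF assms, of size] by simp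
  then obtain p1 p2 where xs: "xs = [p1,p2]"
    by (metis (no_types, lifting) One_nat_def Suc_1 length_0_conv length_Suc_conv)
  obtain u e1 v e2 where "p1 = (u,e1)" "p2 = (v,e2)" by fastforce
  with assms xs show ?thesis by (auto simp: add_eq_conv_ex)
qed

lemma jnf_pow_zero:
  fixes M :: "'a::field mat"
  assumes M: "M \<in> carrier_mat n n" and j: "jordan_nf M na" and z: "M ^\<^sub>m k = 0\<^sub>m n n"
  shows "jordan_matrix na ^\<^sub>m k = 0\<^sub>m n n"
proof -
  from j obtain P Q where w: "similar_mat_wit M (jordan_matrix na) P Q"
    unfolding jordan_nf_def similar_mat_def by blast
  have w2: "similar_mat_wit (jordan_matrix na) M Q P" by (rule similar_mat_wit_sym[OF w])
  have c: "P \<in> carrier_mat n n" "Q \<in> carrier_mat n n"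
    using w M unfolding similar_mat_wit_def Let_def by auto
  have "jordan_matrix na ^\<^sub>m k = Q * M ^\<^sub>m k * P" by (rule similar_mat_wit_pow_id[OF w2])
  also have "\<dots> = 0\<^sub>m n n" using c by (simp add: z)
  finally show ?thesis .
qed

lemma jnf2_info:
  fixes M :: "'a::field mat"
  assumes M: "M \<in> carrier_mat n n" and j: "jordan_nf M [(u,e1),(v,e2)]" and z: "M ^\<^sub>m k = 0\<^sub>m n n"
  shows "e1 = 0 \<and> e2 = 0 \<and> u \<le> k \<and> v \<le> k"
proof -
  have Jz: "jordan_matrix [(u,e1),(v,e2)] ^\<^sub>m k = 0\<^sub>m n n" by (rule jnf_pow_zero[OF M j z])
  have uv: "u > 0" "v > 0" using j unfolding jordan_nf_def by auto
  have nuv: "n = u + v" using j M unfolding jordan_nf_def similar_mat_def similar_mat_wit_def Let_def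
    by (metis carrier_matD(1) insert_subset jordan_matrix_carrier list.simps(8,9) prod.sel(1) sum_list.Cons sum_list.Nil add.right_neutral)
  have E: "(jordan_matrix [(u,e1),(v,e2)] ^\<^sub>m k) $$ (r,c) = 0" if "r < u + v" "c < u + v" for r c
    using Jz that nuv by simp
  have "e1 ^ k = 0" using E[of 0 0] uv by (simp add: jm2_pow_entry jordan_block_pow)
  moreover have "e2 ^ k = 0" using E[of u u] uv by (simp add: jm2_pow_entry jordan_block_pow)
  moreover have "u \<le> k"
  proof (rule ccontr)
    assume "\<not> u \<le> k"
    then show False using E[of 0 k] uv by (simp add: jm2_pow_entry jordan_block_pow)
  qed
  moreover have "v \<le> k"
  proof (rule ccontr)
    assume "\<not> v \<le> k"
    then show False using E[of u "u+k"] uv by (simp add: jm2_pow_entry jordan_block_pow)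
  qed
  ultimately show ?thesis by simp
qed

theorem lemma3p4:
  fixes A B :: "'a :: {alg_closed_field, field_char_0} mat"
    and l1 l2 m1 m2 n :: nat
  assumes "l1 - l2 = 2" "l1 \<ge> l2" "l2 \<ge> 1" "n = l1 + l2"
    and "m1 \<ge> m2" "m2 \<ge> 1" "m1 + m2 = n"
    and "A \<in> carrier_mat n n" "B \<in> carrier_mat n n"
    and "nilpotent_mat A" "nilpotent_mat B" "A * B = B * A"
    and "has_shape B {#l1, l2#}" "has_shape A {#m1, m2#}"
  shows "m1 = l1 \<or> m1 = l1 - 1"
proof -
  note a = assms
  have Ac: "A \<in> carrier_mat n n" and Bc: "B \<in> carrier_mat n n" using a by auto
  obtain KA where KA: "A ^\<^sub>m KA = 0\<^sub>m n n" using a(10) Ac unfolding nilpotent_mat_def by auto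
  obtain KB where KB: "B ^\<^sub>m KB = 0\<^sub>m n n" using a(11) Bc unfolding nilpotent_mat_def by auto
  obtain nb where jb: "jordan_nf B nb" and mb: "mset (map fst nb) = {#l1, l2#}"
    using a(13) unfolding has_shape_def by auto
  obtain s1 s2 e1 e2 where nb: "nb = [(s1,e1),(s2,e2)]" and ss: "(s1 = l1 \<and> s2 = l2) \<or> (s1 = l2 \<and> s2 = l1)"
    using two_list[OF mb] by blast
  have e0: "e1 = 0" "e2 = 0" using jnf2_info[OF Bc jb[unfolded nb] KB] by auto
  let ?J = "jordan_matrix [(s1,0::'a),(s2,0)]"
  have nsum: "n = s1 + s2" using ss a by auto
  from jb[unfolded nb e0] obtain P Q where w: "similar_mat_wit B ?J P Q"
    unfolding jordan_nf_def similar_mat_def by blast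
  have c: "P \<in> carrier_mat n n" "Q \<in> carrier_mat n n" "?J \<in> carrier_mat n n"
    and PQ: "P * Q = 1\<^sub>m n" "Q * P = 1\<^sub>m n" and BJ: "B = P * ?J * Q"
    using w Bc unfolding similar_mat_wit_def Let_def by auto
  have w2: "similar_mat_wit ?J B Q P" by (rule similar_mat_wit_sym[OF w])
  have JB: "?J = Q * B * P" using w2 unfolding similar_mat_wit_def Let_def by auto
  define A' where "A' = Q * A * P"
  have A'c: "A' \<in> carrier_mat n n" unfolding A'_def using c Ac by auto
  have wA: "similar_mat_wit A' A Q P" unfolding similar_mat_wit_def Let_def A'_def
    using c Ac PQ by auto
  have wA2: "similar_mat_wit A A' P Q" by (rule similar_mat_wit_sym[OF wA])
  have comm: "A' * ?J = ?J * A'"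
  proof -
    have "A' * ?J = Q * A * (P * Q) * B * P" unfolding A'_def JB using c Ac Bc
      by (simp add: assoc_mult_mat[of _ n n _ n _ n])
    also have "\<dots> = Q * (A * B) * P" using c Ac Bc PQ
      by (simp add: assoc_mult_mat[of _ n n _ n _ n])
    also have "\<dots> = Q * (B * A) * P" using a(12) by simp
    also have "\<dots> = Q * B * (P * Q) * A * P" using c Ac Bc PQ
      by (simp add: assoc_mult_mat[of _ n n _ n _ n])
    also have "\<dots> = ?J * A'" unfolding A'_def JB using c Ac Bc
      by (simp add: assoc_mult_mat[of _ n n _ n _ n])
    finally show ?thesis .
  qed
  have nilA': "A' ^\<^sub>m KA = 0\<^sub>m n n"
    using similar_mat_wit_pow_id[OF wA, of KA] KA c by simp
  have ss': "(s1 = l2+2 \<and> s2 = l2) \<or> (s1 = l2 \<and> s2 = l2+2)" using ss a by auto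
  have "A' ^\<^sub>m (Suc (l2+1)) = 0\<^sub>m n n"
    using core[OF ss' a(3), where A=A' and K=KA] A'c comm nilA' nsum by simp
  then have Az: "A ^\<^sub>m (Suc (l2+1)) = 0\<^sub>m n n"
    using similar_mat_wit_pow_id[OF wA2, of "Suc (l2+1)"] c by simp
  obtain na where ja: "jordan_nf A na" and ma: "mset (map fst na) = {#m1, m2#}"
    using a(14) unfolding has_shape_def by auto
  obtain u v f1 f2 where na: "na = [(u,f1),(v,f2)]" and uv: "(u = m1 \<and> v = m2) \<or> (u = m2 \<and> v = m1)"
    using two_list[OF ma] by blast
  have "u \<le> Suc (l2+1)" "v \<le> Suc (l2+1)" using jnf2_info[OF Ac ja[unfolded na] Az] by auto
  then have "m1 \<le> l2 + 2" using uv by auto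
  then show ?thesis using a by auto
qed
end
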